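(* Let $\mathfrak g$ be a nilpotent Lie algebra of step $s$, $\overline X\in\mathfrak g/[\mathfrak g,\mathfrak g]$, and $x\in\mathfrak g$ a representative of $\overline X$. Define $\mathfrak g^{(0)}=\mathfrak g^{(1)}=\mathfrak g$ and $\mathfrak g^{(i+1)}=[\mathfrak g,\mathfrak g^{(i)}]+[x,\mathfrak g^{(i-1)}]$ for $i\ge1$. Then $\mathfrak g^{(2)}=[\mathfrak g,\mathfrak g]$, and for $k\ge3$, $\mathfrak g^{(k)}$ is the linear span of the iterated brackets $[x_1,[x_2,\dots[x_{j-1},x_j]\dots]]$ with either $j\ge k$, or $j<k$ and at least $k-j$ of the $x_i$ congruent to $x$ modulo $[\mathfrak g,\mathfrak g]$. In particular the sequence $(\mathfrak g^{(i)})$ depends only on $\overline X$ and not on $x$, and $[\mathfrak g^{(i)},\mathfrak g^{(j)}]\subseteq\mathfrak g^{(i+j)}$ for all $i,j\ge1$. Moreover $\mathfrak g^{[i]}\subseteq\mathfrak g^{(i)}\subseteq\mathfrak g^{[\lfloor i/2\rfloor+1]}$ for all $i\ge1$, and $\mathfrak g^{(2s)}=0$.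
   Context: $\mathfrak g^{[1]}=\mathfrak g$, $\mathfrak g^{[i+1]}=[\mathfrak g,\mathfrak g^{[i]}]$ is the descending central series; step $s$ means $\mathfrak g^{[s+1]}=0$. *)

theory Defs
  imports Complex_Main
begin

definition lie_algebra :: "('k::field \<Rightarrow> 'a::ab_group_add \<Rightarrow> 'a) \<Rightarrow> ('a \<Rightarrow> 'a \<Rightarrow> 'a) \<Rightarrow> bool" where
  "lie_algebra sc br \<longleftrightarrow> vector_space sc
     \<and> (\<forall>a b c. br (a + b) c = br a c + br b c)
     \<and> (\<forall>a b c. br a (b + c) = br a b + br a c)
     \<and> (\<forall>r a b. br (sc r a) b = sc r (br a b))
     \<and> (\<forall>r a b. br a (sc r b) = sc r (br a b))
     \<and> (\<forall>a. br a a = 0)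
     \<and> (\<forall>a b c. br a (br b c) + br b (br c a) + br c (br a b) = 0)"

definition lie_br_set :: "('k::field \<Rightarrow> 'a::ab_group_add \<Rightarrow> 'a) \<Rightarrow> ('a \<Rightarrow> 'a \<Rightarrow> 'a) \<Rightarrow> 'a set \<Rightarrow> 'a set \<Rightarrow> 'a set" where
  "lie_br_set sc br A B = module.span sc {br a b | a b. a \<in> A \<and> b \<in> B}"

text \<open>Descending central series, indexed from 1: lcs 1 = g, lcs (i+1) = [g, lcs i].
  (lcs 0 = g as a harmless convention.)\<close>
fun lcs :: "('k::field \<Rightarrow> 'a::ab_group_add \<Rightarrow> 'a) \<Rightarrow> ('a \<Rightarrow> 'a \<Rightarrow> 'a) \<Rightarrow> nat \<Rightarrow> 'a set" where
  "lcs sc br 0 = UNIV"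
| "lcs sc br (Suc 0) = UNIV"
| "lcs sc br (Suc (Suc i)) = lie_br_set sc br UNIV (lcs sc br (Suc i))"

definition nilpotent_step :: "('k::field \<Rightarrow> 'a::ab_group_add \<Rightarrow> 'a) \<Rightarrow> ('a \<Rightarrow> 'a \<Rightarrow> 'a) \<Rightarrow> nat \<Rightarrow> bool" where
  "nilpotent_step sc br s \<longleftrightarrow> lcs sc br (s + 1) = {0}"

definition set_sum :: "'a::ab_group_add set \<Rightarrow> 'a set \<Rightarrow> 'a set" where
  "set_sum A B = {a + b | a b. a \<in> A \<and> b \<in> B}"

fun gfil :: "('k::field \<Rightarrow> 'a::ab_group_add \<Rightarrow> 'a) \<Rightarrow> ('a \<Rightarrow> 'a \<Rightarrow> 'a) \<Rightarrow> 'a \<Rightarrow> nat \<Rightarrow> 'a set" where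
  "gfil sc br x 0 = UNIV"
| "gfil sc br x (Suc 0) = UNIV"
| "gfil sc br x (Suc (Suc i)) =
     set_sum (lie_br_set sc br UNIV (gfil sc br x (Suc i))) (lie_br_set sc br {x} (gfil sc br x i))"

fun iter_br :: "('a \<Rightarrow> 'a \<Rightarrow> 'a) \<Rightarrow> 'a list \<Rightarrow> 'a" where
  "iter_br br [] = undefined"
| "iter_br br [y] = y"
| "iter_br br (y # z # zs) = br y (iter_br br (z # zs))"

end

theory Submission
  imports Defs
begin

locale lie_alg =
  fixes sc :: "'k::field \<Rightarrow> 'a::ab_group_add \<Rightarrow> 'a" and br :: "'a \<Rightarrow> 'a \<Rightarrow> 'a"
  assumes LA: "lie_algebra sc br"
begin

sublocale vector_space sc using LA unfolding lie_algebra_def by auto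

lemma br_add_l: "br (a + b) c = br a c + br b c" using LA unfolding lie_algebra_def by auto
lemma br_add_r: "br a (b + c) = br a b + br a c" using LA unfolding lie_algebra_def by auto
lemma br_sc_l: "br (sc r a) b = sc r (br a b)" using LA unfolding lie_algebra_def by auto
lemma br_sc_r: "br a (sc r b) = sc r (br a b)" using LA unfolding lie_algebra_def by auto
lemma br_self: "br a a = 0" using LA unfolding lie_algebra_def by auto
lemma jacobi: "br a (br b c) + br b (br c a) + br c (br a b) = 0" using LA unfolding lie_algebra_def by auto

lemma grp1: fixes p q r :: "'b::ab_group_add" shows "p + -q + -r = 0 \<Longrightarrow> r = p - q"
  by (metis add_diff_cancel_left' diff_conv_add_uminus eq_neg_iff_add_eq_0 minus_add_distrib minus_diff_eq add.commute)
lemma grp2: fixes p q :: "'b::ab_group_add" shows "p + q = 0 \<Longrightarrow> p = - q"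
  by (simp add: eq_neg_iff_add_eq_0)

lemma br_0_l[simp]: "br 0 b = 0"
  using br_add_l[of 0 0 b] by (metis add_0 add_cancel_right_right)
lemma br_0_r[simp]: "br a 0 = 0"
  using br_add_r[of a 0 0] by (metis add_0 add_cancel_right_right)
lemma br_neg_l: "br (- a) b = - br a b"
proof -
  have "br (- a) b + br a b = 0" using br_add_l[of "-a" a b] by (metis br_0_l left_minus)
  then show ?thesis by (rule grp2)
qed
lemma br_neg_r: "br a (- b) = - br a b"
proof -
  have "br a (- b) + br a b = 0" using br_add_r[of a "-b" b] by (metis br_0_r left_minus)
  then show ?thesis by (rule grp2)
qed
lemma br_diff_l: "br (a - b) c = br a c - br b c"
  by (simp only: diff_conv_add_uminus br_add_l br_neg_l)
lemma br_diff_r: "br a (b - c) = br a b - br a c"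
  by (simp only: diff_conv_add_uminus br_add_r br_neg_r)
lemma br_anti: "br a b = - br b a"
proof -
  have "br a b + br b a = (br a a + br a b) + (br b a + br b b)" by (simp only: br_self add_0 add_0_right)
  also have "\<dots> = br (a+b) (a+b)" by (simp only: br_add_l br_add_r ac_simps)
  also have "\<dots> = 0" by (rule br_self)
  finally show ?thesis by (rule grp2)
qed
lemma jac2: "br (br u v) t = br u (br v t) - br v (br u t)"
proof -
  have "br u (br v t) + br v (br t u) + br t (br u v) = 0" by (rule jacobi)
  moreover have "br v (br t u) = - br v (br u t)" by (simp only: br_anti[of t u] br_neg_r)
  moreover have "br t (br u v) = - br (br u v) t" by (rule br_anti)
  ultimately have "br u (br v t) + - br v (br u t) + - br (br u v) t = 0" by (simp only:)
  then show ?thesis by (rule grp1)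
qed

abbreviation W where "W \<equiv> lie_br_set sc br"

lemma W_def': "W A B = span {br a b | a b. a \<in> A \<and> b \<in> B}"
  by (simp add: lie_br_set_def)

lemma br_span_r:
  assumes C: "subspace C" and b: "b \<in> span B" and g: "\<And>b'. b' \<in> B \<Longrightarrow> br a b' \<in> C"
  shows "br a b \<in> C"
  using b
proof (induct rule: span_induct)
  case base show ?case using C unfolding subspace_def
    by (auto simp: br_add_r br_sc_r)
next
  case (step x) then show ?case using g by simp
qed

lemma br_span_l:
  assumes C: "subspace C" and a: "a \<in> span A" and g: "\<And>a'. a' \<in> A \<Longrightarrow> br a' b \<in> C"
  shows "br a b \<in> C"
  using a
proof (induct rule: span_induct)
  case base show ?case using C unfolding subspace_def
    by (auto simp: br_add_l br_sc_l)
next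
  case (step x) then show ?case using g by simp
qed

lemma W_mem: "a \<in> A \<Longrightarrow> b \<in> B \<Longrightarrow> br a b \<in> W A B"
  unfolding W_def' by (rule span_base) blast

lemma W_le: "subspace C \<Longrightarrow> (\<And>a b. a \<in> A \<Longrightarrow> b \<in> B \<Longrightarrow> br a b \<in> C) \<Longrightarrow> W A B \<subseteq> C"
  unfolding W_def' by (rule span_minimal) auto

lemma W_sub[simp]: "subspace (W A B)" unfolding W_def' by simp

lemma W_mono: "A \<subseteq> A' \<Longrightarrow> B \<subseteq> B' \<Longrightarrow> W A B \<subseteq> W A' B'"
  by (rule W_le) (auto intro: W_mem)

lemma set_sum_sub: "subspace A \<Longrightarrow> subspace B \<Longrightarrow> subspace (set_sum A B)"
proof -
  assume A: "subspace A" and B: "subspace B"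
  show ?thesis unfolding subspace_def
  proof (intro conjI ballI allI)
    show "0 \<in> set_sum A B" unfolding set_sum_def
      using subspace_0[OF A] subspace_0[OF B] by force
  next
    fix u v assume "u \<in> set_sum A B" "v \<in> set_sum A B"
    then obtain a b a' b' where u: "u = a + b" "a \<in> A" "b \<in> B" and v: "v = a' + b'" "a' \<in> A" "b' \<in> B"
      unfolding set_sum_def by blast
    have "u + v = (a + a') + (b + b')" using u v by (simp add: ac_simps)
    moreover have "a + a' \<in> A" "b + b' \<in> B" using u v subspace_add A B by blast+
    ultimately show "u + v \<in> set_sum A B" unfolding set_sum_def by blast
  next
    fix c u assume "u \<in> set_sum A B"
    then obtain a b where u: "u = a + b" "a \<in> A" "b \<in> B"
      unfolding set_sum_def by blast
    have "sc c u = sc c a + sc c b" using u by (simp add: scale_right_distrib)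
    moreover have "sc c a \<in> A" "sc c b \<in> B" using u subspace_scale A B by blast+
    ultimately show "sc c u \<in> set_sum A B" unfolding set_sum_def by blast
  qed
qed

lemma set_sum_le: "subspace C \<Longrightarrow> A \<subseteq> C \<Longrightarrow> B \<subseteq> C \<Longrightarrow> set_sum A B \<subseteq> C"
  unfolding set_sum_def using subspace_add by blast

lemma set_sum_l: "subspace B \<Longrightarrow> a \<in> A \<Longrightarrow> a \<in> set_sum A B"
proof -
  assume "subspace B" "a \<in> A"
  then have "a = a + 0" "0 \<in> B" using subspace_0 by auto
  then show ?thesis using \<open>a \<in> A\<close> unfolding set_sum_def by blast
qed
lemma set_sum_r: "subspace A \<Longrightarrow> b \<in> B \<Longrightarrow> b \<in> set_sum A B"
proof -
  assume "subspace A" "b \<in> B"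
  then have "b = 0 + b" "0 \<in> A" using subspace_0 by auto
  then show ?thesis using \<open>b \<in> B\<close> unfolding set_sum_def by blast
qed
lemma set_sum_mono: "A \<subseteq> A' \<Longrightarrow> B \<subseteq> B' \<Longrightarrow> set_sum A B \<subseteq> set_sum A' B'"
  unfolding set_sum_def by blast


lemma nat2_induct: "P 0 \<Longrightarrow> P (Suc 0) \<Longrightarrow> (\<And>n. P n \<Longrightarrow> P (Suc n) \<Longrightarrow> P (Suc (Suc n))) \<Longrightarrow> P n"
proof -
  assume a: "P 0" "P (Suc 0)" "\<And>n. P n \<Longrightarrow> P (Suc n) \<Longrightarrow> P (Suc (Suc n))"
  have "P n \<and> P (Suc n)"
  proof (induct n)
    case 0 show ?case using a(1,2) by (rule conjI)
  next
    case (Suc n) then show ?case using a(3)[of n] by blast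
  qed
  then show "P n" by simp
qed

abbreviation L where "L \<equiv> lcs sc br"
abbreviation G where "G \<equiv> gfil sc br"

lemma L_sub: "subspace (L n)"
  by (rule nat2_induct[of _ n]) auto

lemma G_sub: "subspace (G x n)"
  by (rule nat2_induct[of _ n]) (auto intro: set_sum_sub)

lemma G_0[simp]: "0 \<in> G x n" using G_sub subspace_0 by blast
lemma L_0[simp]: "0 \<in> L n" using L_sub subspace_0 by blast

lemma L2: "L 2 = W UNIV UNIV" by (simp add: numeral_2_eq_2)

lemma G_Suc: "b \<in> G x m \<Longrightarrow> br a b \<in> G x (Suc m)"
proof (cases m)
  case (Suc p) assume "b \<in> G x m"
  then show ?thesis using Suc by (auto intro!: set_sum_l G_sub W_sub W_mem)
qed simp

lemma G_x: "b \<in> G x m \<Longrightarrow> br x b \<in> G x (Suc (Suc m))"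
  by (auto intro!: set_sum_r W_sub W_mem)

lemma G_dec1: "G x (Suc n) \<subseteq> G x n"
proof -
  have "G x (Suc n) \<subseteq> G x n \<and> G x (Suc (Suc n)) \<subseteq> G x (Suc n)"
  proof (induct n)
    case (Suc n)
    have "set_sum (W UNIV (G x (Suc (Suc n)))) (W {x} (G x (Suc n))) \<subseteq> set_sum (W UNIV (G x (Suc n))) (W {x} (G x n))"
      using Suc by (intro set_sum_mono W_mono) auto
    then show ?case using Suc by (simp only: gfil.simps)
  qed simp
  then show ?thesis by simp
qed

lemma G_anti: "m \<le> n \<Longrightarrow> G x n \<subseteq> G x m"
  by (induct n rule: dec_induct) (use G_dec1 in blast)+

lemma L_dec1: "L (Suc n) \<subseteq> L n"
proof -
  have "L (Suc n) \<subseteq> L n \<and> L (Suc (Suc n)) \<subseteq> L (Suc n)"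
  proof (induct n)
    case (Suc n)
    have "W UNIV (L (Suc (Suc n))) \<subseteq> W UNIV (L (Suc n))"
      using Suc by (intro W_mono) auto
    then show ?case using Suc by (simp only: lcs.simps)
  qed simp
  then show ?thesis by simp
qed

lemma L_anti: "m \<le> n \<Longrightarrow> L n \<subseteq> L m"
  by (induct n rule: dec_induct) (use L_dec1 in blast)+

lemma G2: "G x 2 = L 2"
proof -
  have "G x 2 = set_sum (W UNIV UNIV) (W {x} UNIV)" by (simp add: numeral_2_eq_2)
  also have "\<dots> = W UNIV UNIV"
  proof
    show "set_sum (W UNIV UNIV) (W {x} UNIV) \<subseteq> W UNIV UNIV"
      by (intro set_sum_le W_sub W_mono order_refl) auto
    show "W UNIV UNIV \<subseteq> set_sum (W UNIV UNIV) (W {x} UNIV)"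
      using set_sum_l[OF W_sub] by blast
  qed
  finally show ?thesis by (simp add: L2)
qed

lemma brG: "1 \<le> i \<Longrightarrow> 1 \<le> j \<Longrightarrow> a \<in> G x i \<Longrightarrow> b \<in> G x j \<Longrightarrow> br a b \<in> G x (i+j)"
proof (induct i arbitrary: j a b rule: less_induct)
  case (less i)
  have IH': "br c d \<in> G x (p+j')" if "p < i" "1 \<le> j'" "c \<in> G x p" "d \<in> G x j'" for p c d j'
  proof (cases "p = 0")
    case True
    then show ?thesis using G_Suc[OF that(4), of c] G_dec1 by auto
  next
    case False then show ?thesis using less that by auto
  qed
  show ?case
  proof (cases "i = 1")
    case True then show ?thesis using G_Suc[OF less(5)] by simp
  next
    case False
    then obtain p where ip: "i = Suc (Suc p)" using less(2)
      by (metis One_nat_def Suc_le_D Suc_le_lessD less_one not0_implies_Suc)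
    from less(4) obtain a1 a2 where a: "a = a1 + a2" and
      a1: "a1 \<in> W UNIV (G x (Suc p))" and a2: "a2 \<in> W {x} (G x p)"
      unfolding ip gfil.simps set_sum_def by blast
    have e: "i + j = Suc (Suc p + j)" using ip by simp
    have "br a1 b \<in> G x (i+j)"
      using a1 unfolding W_def'
    proof (rule br_span_l[OF G_sub])
      fix a' assume "a' \<in> {br a b |a b. a \<in> UNIV \<and> b \<in> G x (Suc p)}"
      then obtain u g where a': "a' = br u g" and g: "g \<in> G x (Suc p)" by blast
      have "br g b \<in> G x (Suc p + j)" using IH'[OF _ less(3) g less(5)] ip by simp
      then have 1: "br u (br g b) \<in> G x (i+j)" using G_Suc[of "br g b" x "Suc p + j" u] e by simp
      have "br u b \<in> G x (Suc j)" using G_Suc less(5) by blast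
      then have 2: "br g (br u b) \<in> G x (i+j)" using IH'[OF _ _ g, of "Suc j" "br u b"] ip by simp
      show "br a' b \<in> G x (i+j)" unfolding a' jac2 by (rule subspace_diff[OF G_sub 1 2])
    qed
    moreover have "br a2 b \<in> G x (i+j)"
      using a2 unfolding W_def'
    proof (rule br_span_l[OF G_sub])
      fix a' assume "a' \<in> {br a b |a b. a \<in> {x} \<and> b \<in> G x p}"
      then obtain g where a': "a' = br x g" and g: "g \<in> G x p" by blast
      have "br g b \<in> G x (p + j)" using IH'[OF _ less(3) g less(5)] ip by simp
      then have 1: "br x (br g b) \<in> G x (i+j)" using G_x[of "br g b" x "p + j"] ip by simp
      have "br x b \<in> G x (Suc (Suc j))" using G_x less(5) by blast
      then have 2: "br g (br x b) \<in> G x (i+j)" using IH'[OF _ _ g, of "Suc (Suc j)" "br x b"] ip by simp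
      show "br a' b \<in> G x (i+j)" unfolding a' jac2 by (rule subspace_diff[OF G_sub 1 2])
    qed
    ultimately show ?thesis unfolding a br_add_l by (rule subspace_add[OF G_sub])
  qed
qed

lemma L_le_G: "L n \<subseteq> G x n"
proof (rule nat2_induct[of _ n])
  fix n assume "L (Suc n) \<subseteq> G x (Suc n)"
  then show "L (Suc (Suc n)) \<subseteq> G x (Suc (Suc n))"
    unfolding lcs.simps gfil.simps
    by (intro subsetI set_sum_l[OF W_sub]) (use W_mono in blast)
qed auto


lemma G_le_L: "G x n \<subseteq> L (n div 2 + 1)"
proof (rule nat2_induct[of _ n])
  fix n assume IH: "G x n \<subseteq> L (n div 2 + 1)" "G x (Suc n) \<subseteq> L (Suc n div 2 + 1)"
  have A: "W UNIV (G x (Suc n)) \<subseteq> L (Suc (Suc (Suc n div 2)))"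
  proof -
    have "W UNIV (G x (Suc n)) \<subseteq> W UNIV (L (Suc (Suc n div 2)))"
      using IH(2) by (intro W_mono) auto
    then show ?thesis by (simp only: lcs.simps)
  qed
  have B: "W {x} (G x n) \<subseteq> L (Suc (Suc (n div 2)))"
  proof -
    have "W {x} (G x n) \<subseteq> W UNIV (L (Suc (n div 2)))"
      using IH(1) by (intro W_mono) auto
    then show ?thesis by (simp only: lcs.simps)
  qed
  have "L (Suc (Suc (Suc n div 2))) \<subseteq> L (Suc (Suc (n div 2)))"
    by (rule L_anti) simp
  with A B have "set_sum (W UNIV (G x (Suc n))) (W {x} (G x n)) \<subseteq> L (Suc (Suc (n div 2)))"
    by (intro set_sum_le L_sub) auto
  then show "G x (Suc (Suc n)) \<subseteq> L (Suc (Suc n) div 2 + 1)" by simp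
qed auto

definition cnt where "cnt x xs = length (filter (\<lambda>y. y - x \<in> L 2) xs)"
definition Q where "Q x k = {iter_br br xs | xs. xs \<noteq> [] \<and> k \<le> length xs + cnt x xs}"

lemma cnt_le: "cnt x xs \<le> length xs" unfolding cnt_def by simp

lemma Q_eq: "{iter_br br xs | xs. xs \<noteq> [] \<and>
              (length xs \<ge> k \<or>
               (length xs < k \<and>
                card {i. i < length xs \<and> xs ! i - x \<in> L 2} \<ge> k - length xs))} = Q x k"
proof -
  have e: "(length xs \<ge> k \<or> (length xs < k \<and> c \<ge> k - length xs)) = (k \<le> length xs + c)"
    for xs :: "'a list" and c :: nat by linarith
  show ?thesis unfolding Q_def cnt_def length_filter_conv_card e ..
qed

lemma iter_br_Cons: "xs \<noteq> [] \<Longrightarrow> iter_br br (a # xs) = br a (iter_br br xs)"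
  by (cases xs) auto

lemma G_le_S: "G x k \<subseteq> span (Q x k)"
proof (rule nat2_induct[of _ k])
  have "y \<in> span (Q x 0)" for y
    by (rule span_base) (unfold Q_def, rule CollectI, rule exI[of _ "[y]"], simp)
  then show "G x 0 \<subseteq> span (Q x 0)" by auto
  have "y \<in> span (Q x (Suc 0))" for y
    by (rule span_base) (unfold Q_def, rule CollectI, rule exI[of _ "[y]"], simp)
  then show "G x (Suc 0) \<subseteq> span (Q x (Suc 0))" by auto
next
  fix n assume IH: "G x n \<subseteq> span (Q x n)" "G x (Suc n) \<subseteq> span (Q x (Suc n))"
  have A: "W UNIV (G x (Suc n)) \<subseteq> span (Q x (Suc (Suc n)))"
  proof (rule W_le[OF subspace_span])
    fix a b assume "b \<in> G x (Suc n)"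
    then have "b \<in> span (Q x (Suc n))" using IH by auto
    then show "br a b \<in> span (Q x (Suc (Suc n)))"
    proof (rule br_span_r[OF subspace_span])
      fix b' assume "b' \<in> Q x (Suc n)"
      then obtain xs where b': "b' = iter_br br xs" "xs \<noteq> []" "Suc n \<le> length xs + cnt x xs"
        unfolding Q_def by blast
      have "cnt x xs \<le> cnt x (a # xs)" unfolding cnt_def by simp
      then have "br a b' \<in> Q x (Suc (Suc n))" unfolding Q_def
        using b' iter_br_Cons[OF b'(2), of a] by (intro CollectI exI[of _ "a # xs"]) auto
      then show "br a b' \<in> span (Q x (Suc (Suc n)))" by (rule span_base)
    qed
  qed
  have B: "W {x} (G x n) \<subseteq> span (Q x (Suc (Suc n)))"
  proof (rule W_le[OF subspace_span])
    fix a b assume "a \<in> {x}" "b \<in> G x n"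
    then have a: "a = x" and b: "b \<in> span (Q x n)" using IH by auto
    have "br x b \<in> span (Q x (Suc (Suc n)))"
      using b
    proof (rule br_span_r[OF subspace_span])
      fix b' assume "b' \<in> Q x n"
      then obtain xs where b': "b' = iter_br br xs" "xs \<noteq> []" "n \<le> length xs + cnt x xs"
        unfolding Q_def by blast
      have "cnt x (x # xs) = Suc (cnt x xs)" unfolding cnt_def by simp
      then have "br x b' \<in> Q x (Suc (Suc n))" unfolding Q_def
        using b' iter_br_Cons[OF b'(2), of x] by (intro CollectI exI[of _ "x # xs"]) auto
      then show "br x b' \<in> span (Q x (Suc (Suc n)))" by (rule span_base)
    qed
    then show "br a b \<in> span (Q x (Suc (Suc n)))" using a by simp
  qed
  show "G x (Suc (Suc n)) \<subseteq> span (Q x (Suc (Suc n)))"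
    using A B by (simp only: gfil.simps) (intro set_sum_le subspace_span)
qed

declare gfil.simps[simp del] lcs.simps[simp del]

lemma brA: "a - x \<in> L 2 \<Longrightarrow> t \<in> G x m \<Longrightarrow> 1 \<le> m \<Longrightarrow> br a t \<in> G x (Suc (Suc m))"
proof -
  assume h: "a - x \<in> L 2" "t \<in> G x m" "1 \<le> m"
  have e: "br a t = br x t + br (a - x) t" by (simp add: br_diff_l)
  have 2: "br x t \<in> G x (Suc (Suc m))" using G_x h by blast
  have "a - x \<in> G x 2" using h G2 by simp
  then have "br (a - x) t \<in> G x (2 + m)" using brG[of 2 m "a - x" x t] h by simp
  then have 3: "br (a - x) t \<in> G x (Suc (Suc m))" by (simp add: numeral_2_eq_2)
  show ?thesis unfolding e by (rule subspace_add[OF G_sub 2 3])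
qed

lemma iterG2: "br p q \<in> G x (2 + cnt x [p, q])"
proof -
  have q1: "q \<in> G x 1" and p1: "p \<in> G x 1" by (simp_all add: gfil.simps)
  show ?thesis
  proof (cases "p - x \<in> L 2"; cases "q - x \<in> L 2")
    assume hp: "p - x \<in> L 2" and hq: "q - x \<in> L 2"
    have e: "br p q = br x (q - x) - br x (p - x) + br (p - x) (q - x)"
    proof -
      have "br p q = br (x + (p - x)) (x + (q - x))" by simp
      also have "\<dots> = br x x + br x (q - x) + br (p - x) x + br (p - x) (q - x)"
        by (simp only: br_add_l br_add_r ac_simps)
      also have "br (p - x) x = - br x (p - x)" by (rule br_anti)
      finally show ?thesis by (simp add: br_self)
    qed
    have gp: "p - x \<in> G x 2" using hp G2[of x] by simp
    have gq: "q - x \<in> G x 2" using hq G2[of x] by simp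
    have 1: "br x (q - x) \<in> G x 4" using G_x[OF gq] by (simp add: numeral_eq_Suc)
    have 2: "br x (p - x) \<in> G x 4" using G_x[OF gp] by (simp add: numeral_eq_Suc)
    have 3: "br (p - x) (q - x) \<in> G x 4" using brG[OF _ _ gp gq] by simp
    have "br p q \<in> G x 4" unfolding e
      by (rule subspace_add[OF G_sub subspace_diff[OF G_sub 1 2] 3])
    moreover have "2 + cnt x [p, q] = 4" using hp hq by (simp add: cnt_def)
    ultimately show ?thesis by (simp add: numeral_eq_Suc)
  next
    assume hp: "p - x \<in> L 2" and hq: "q - x \<notin> L 2"
    have "br p q \<in> G x (Suc (Suc 1))" using brA[OF hp q1] by simp
    moreover have "2 + cnt x [p, q] = Suc (Suc 1)" using hp hq by (simp add: cnt_def)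
    ultimately show ?thesis by (simp add: numeral_eq_Suc)
  next
    assume hp: "p - x \<notin> L 2" and hq: "q - x \<in> L 2"
    have "br q p \<in> G x (Suc (Suc 1))" using brA[OF hq p1] by simp
    then have "- br q p \<in> G x (Suc (Suc 1))" by (rule subspace_neg[OF G_sub])
    moreover have "2 + cnt x [p, q] = Suc (Suc 1)" using hp hq by (simp add: cnt_def)
    ultimately show ?thesis by (simp add: br_anti[of p q] numeral_eq_Suc)
  next
    assume hp: "p - x \<notin> L 2" and hq: "q - x \<notin> L 2"
    have "br p q \<in> G x (Suc 1)" using G_Suc[OF q1] by simp
    moreover have "2 + cnt x [p, q] = Suc 1" using hp hq by (simp add: cnt_def)
    ultimately show ?thesis by (simp add: numeral_eq_Suc)
  qed
qed

lemma iterG: "2 \<le> length xs \<Longrightarrow> iter_br br xs \<in> G x (length xs + cnt x xs)"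
proof (induct xs rule: induct_list012)
  case (3 a y zs)
  show ?case
  proof (cases zs)
    case Nil
    then show ?thesis using iterG2[of a y x] by (simp add: add.commute)
  next
    case (Cons z zs')
    then have t: "iter_br br (y # zs) \<in> G x (length (y # zs) + cnt x (y # zs))"
      using 3 by simp
    have e: "iter_br br (a # y # zs) = br a (iter_br br (y # zs))" by simp
    show ?thesis
    proof (cases "a - x \<in> L 2")
      case True
      then have "cnt x (a # y # zs) = Suc (cnt x (y # zs))" unfolding cnt_def by simp
      then show ?thesis unfolding e using brA[OF True t] by simp
    next
      case False
      then have "cnt x (a # y # zs) = cnt x (y # zs)" unfolding cnt_def by simp
      then show ?thesis unfolding e using G_Suc[OF t] by simp
    qed
  qed
qed auto

lemma S_le_G: "3 \<le> k \<Longrightarrow> span (Q x k) \<subseteq> G x k"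
proof (rule span_minimal[OF _ G_sub])
  assume k: "3 \<le> k"
  show "Q x k \<subseteq> G x k"
  proof
    fix t assume "t \<in> Q x k"
    then obtain xs where t: "t = iter_br br xs" "xs \<noteq> []" "k \<le> length xs + cnt x xs"
      unfolding Q_def by blast
    have "length xs \<noteq> 1"
    proof
      assume "length xs = 1"
      then show False using t(3) k cnt_le[of x xs] by linarith
    qed
    moreover have "length xs > 0" using t(2) by simp
    ultimately have "2 \<le> length xs" by linarith
    then show "t \<in> G x k" using iterG[of xs x] G_anti[OF t(3)] t(1) by blast
  qed
qed

lemma G_eq_S: "3 \<le> k \<Longrightarrow> G x k = span (Q x k)"
  using G_le_S S_le_G by blast

lemma Q_indep: "y - x \<in> L 2 \<Longrightarrow> Q y k = Q x k"
proof -
  assume h: "y - x \<in> L 2"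
  have "\<And>z. (z - y \<in> L 2) = (z - x \<in> L 2)"
  proof -
    fix z
    have e: "(z - x) - (y - x) = z - y" "(z - y) + (y - x) = z - x" by simp_all
    show "(z - y \<in> L 2) = (z - x \<in> L 2)"
    proof
      assume "z - y \<in> L 2"
      then have "(z - y) + (y - x) \<in> L 2" using h by (rule subspace_add[OF L_sub])
      then show "z - x \<in> L 2" by (simp only: e)
    next
      assume "z - x \<in> L 2"
      then have "(z - x) - (y - x) \<in> L 2" using h by (rule subspace_diff[OF L_sub])
      then show "z - y \<in> L 2" by (simp only: e)
    qed
  qed
  then have "cnt y xs = cnt x xs" for xs unfolding cnt_def by simp
  then show ?thesis unfolding Q_def by simp
qed

end

theorem lemma2p1:
  fixes sc :: "'k::field \<Rightarrow> 'a::ab_group_add \<Rightarrow> 'a"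
    and br :: "'a \<Rightarrow> 'a \<Rightarrow> 'a"
    and x :: 'a and s :: nat
  assumes "lie_algebra sc br"
    and "nilpotent_step sc br s"
  shows "(gfil sc br x 2 = lcs sc br 2) \<and>
    (\<forall>k\<ge>3. gfil sc br x k = module.span sc
           {iter_br br xs | xs. xs \<noteq> [] \<and>
              (length xs \<ge> k \<or>
               (length xs < k \<and>
                card {i. i < length xs \<and> xs ! i - x \<in> lcs sc br 2} \<ge> k - length xs))}) \<and>
    (\<forall>y. y - x \<in> lcs sc br 2 \<longrightarrow> (\<forall>i. gfil sc br y i = gfil sc br x i)) \<and>
    (\<forall>i\<ge>1. \<forall>j\<ge>1. lie_br_set sc br (gfil sc br x i) (gfil sc br x j) \<subseteq> gfil sc br x (i + j)) \<and>
    (\<forall>i\<ge>1. lcs sc br i \<subseteq> gfil sc br x i \<and> gfil sc br x i \<subseteq> lcs sc br (i div 2 + 1)) \<and>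
    (gfil sc br x (2 * s) = {0})"
proof -
  interpret lie_alg sc br by unfold_locales (rule assms(1))
  have c1: "G x 2 = L 2" by (rule G2)
  have c2: "\<forall>k\<ge>3. G x k = span {iter_br br xs | xs. xs \<noteq> [] \<and>
              (length xs \<ge> k \<or>
               (length xs < k \<and>
                card {i. i < length xs \<and> xs ! i - x \<in> L 2} \<ge> k - length xs))}"
    unfolding Q_eq by (intro allI impI G_eq_S)
  have c3: "\<forall>y. y - x \<in> L 2 \<longrightarrow> (\<forall>i. G y i = G x i)"
  proof (intro allI impI)
    fix y i assume h: "y - x \<in> L 2"
    show "G y i = G x i"
    proof (cases "3 \<le> i")
      case True then show ?thesis using G_eq_S[OF True, of x] G_eq_S[OF True, of y] Q_indep[OF h, of i] by simp
    next
      case False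
      then have "i = 0 \<or> i = 1 \<or> i = 2" by linarith
      moreover have "G y 0 = G x 0" "G y 1 = G x 1" by (simp_all add: gfil.simps)
      moreover have "G y 2 = G x 2" using G2[of y] G2[of x] by (rule trans[OF _ sym])
      ultimately show ?thesis by blast
    qed
  qed
  have c4: "\<forall>i\<ge>1. \<forall>j\<ge>1. W (G x i) (G x j) \<subseteq> G x (i + j)"
  proof (intro allI impI)
    fix i j :: nat assume ij: "1 \<le> i" "1 \<le> j"
    show "W (G x i) (G x j) \<subseteq> G x (i + j)"
      by (rule W_le[OF G_sub]) (rule brG[OF ij])
  qed
  have c5: "\<forall>i\<ge>1. L i \<subseteq> G x i \<and> G x i \<subseteq> L (i div 2 + 1)"
    using L_le_G G_le_L by (intro allI impI conjI)
  have "G x (2 * s) \<subseteq> L (s + 1)" using G_le_L[of x "2 * s"] by simp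
  also have "\<dots> = {0}" using assms(2) unfolding nilpotent_step_def .
  finally have c6: "G x (2 * s) = {0}" using G_0[of x "2 * s"] by blast
  show ?thesis
    apply (rule conjI, rule c1)
    apply (rule conjI, rule c2)
    apply (rule conjI, rule c3)
    apply (rule conjI, rule c4)
    apply (rule conjI, rule c5)
    by (rule c6)
qed

end
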